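(* Let $N\ge 1$ and let $\lambda,\mu$ be complex parameters. Consider fields $x,\widetilde{x},\widehat{x},\widehat{\widetilde{x}}\in\mathbb{C}^N$ with indices taken modulo $N$. Suppose that $x,\widetilde{x},\widehat{x}$ satisfy, for all $k$, $$(E)\qquad (\widetilde{x}_k-x_k)(\lambda+x_k-\widetilde{x}_{k-1})=(\widehat{x}_k-x_k)(\mu+x_k-\widehat{x}_{k-1}).$$ Consider the superposition formulas $$(S1)\qquad (\widehat{\widetilde{x}}_k-\widehat{x}_k)(\lambda+x_{k+1}-\widetilde{x}_k)=(\widehat{\widetilde{x}}_k-\widetilde{x}_k)(\mu+x_{k+1}-\widehat{x}_k),$$ $$(S2)\qquad (\widetilde{x}_{k+1}-x_{k+1})(\lambda+\widehat{x}_{k+1}-\widehat{\widetilde{x}}_k)=(\widehat{x}_{k+1}-x_{k+1})(\mu+\widetilde{x}_{k+1}-\widehat{\widetilde{x}}_k).$$ Then, by virtue of $(E)$, (S1) and (S2) are equivalent, and if $\widehat{\widetilde{x}}$ is defined by either of them, then for all $k$: $$(E_1)\quad (\widetilde{x}_k-x_k)(\lambda+x_{k+1}-\widetilde{x}_k)=(\widehat{\widetilde{x}}_k-\widetilde{x}_k)(\mu+\widetilde{x}_k-\widehat{\widetilde{x}}_{k-1}),$$ $$(E_2)\quad (\widehat{x}_k-x_k)(\mu+x_{k+1}-\widehat{x}_k)=(\widehat{\widetilde{x}}_k-\widehat{x}_k)(\lambda+\widehat{x}_k-\widehat{\widetilde{x}}_{k-1}),$$ $$(E_{12})\quad (\w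idehat{\widetilde{x}}_k-\widehat{x}_k)(\lambda+\widehat{x}_{k+1}-\widehat{\widetilde{x}}_k)=(\widehat{\widetilde{x}}_k-\widetilde{x}_k)(\mu+\widetilde{x}_{k+1}-\widehat{\widetilde{x}}_k).$$
   Context: These are the corner equations for two Bäcklund transformations $F_\lambda,F_\mu$ of the periodic dual Toda lattice $\ddot x_k=\dot x_k(x_{k+1}-2x_k+x_{k-1})$, where $F_\lambda:(x,p)\mapsto(\widetilde x,\widetilde p)$ is given by $e^{p_k}=(\widetilde x_k-x_k)(\lambda+x_k-\widetilde x_{k-1})$, $e^{\widetilde p_k}=(\widetilde x_k-x_k)(\lambda+x_{k+1}-\widetilde x_k)$; hats denote the action of $F_\mu$. *)

theory Defs
  imports Complex_Main
begin

end

theory Submission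
  imports Defs
begin

lemma S12a: fixes l m x1 t0 h0 t1 h1 X :: complex
  assumes "(t1-x1)*(l+x1-t0) = (h1-x1)*(m+x1-h0)" "l+h0-m-t0 \<noteq> 0"
   "(X-h0)*(l+x1-t0) = (X-t0)*(m+x1-h0)"
  shows "(t1-x1)*(l+h1-X) = (h1-x1)*(m+t1-X)"
  using assms by algebra
lemma S12b: fixes l m x1 t0 h0 t1 h1 X :: complex
  assumes "(t1-x1)*(l+x1-t0) = (h1-x1)*(m+x1-h0)" "h1 \<noteq> t1"
   "(t1-x1)*(l+h1-X) = (h1-x1)*(m+t1-X)"
  shows "(X-h0)*(l+x1-t0) = (X-t0)*(m+x1-h0)"
  using assms by algebra
lemma E1: fixes l m x0 x1 t0 h0 tm hm X Xm :: complex
  assumes "(t0-x0)*(l+x0-tm) = (h0-x0)*(m+x0-hm)" "l+h0-m-t0 \<noteq> 0" "l+hm-m-tm \<noteq> 0"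
   "(X-h0)*(l+x1-t0) = (X-t0)*(m+x1-h0)"
   "(Xm-hm)*(l+x0-tm) = (Xm-tm)*(m+x0-hm)"
  shows "(t0-x0)*(l+x1-t0) = (X-t0)*(m+t0-Xm)"
  using assms by algebra
lemma E2: fixes l m x0 x1 t0 h0 tm hm X Xm :: complex
  assumes "(t0-x0)*(l+x0-tm) = (h0-x0)*(m+x0-hm)" "l+h0-m-t0 \<noteq> 0" "l+hm-m-tm \<noteq> 0"
   "(X-h0)*(l+x1-t0) = (X-t0)*(m+x1-h0)"
   "(Xm-hm)*(l+x0-tm) = (Xm-tm)*(m+x0-hm)"
  shows "(h0-x0)*(m+x1-h0) = (X-h0)*(l+h0-Xm)"
  using assms by algebra
lemma E12: fixes l m x1 t0 h0 t1 h1 X :: complex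
  assumes "(t1-x1)*(l+x1-t0) = (h1-x1)*(m+x1-h0)" "l+h0-m-t0 \<noteq> 0"
   "(X-h0)*(l+x1-t0) = (X-t0)*(m+x1-h0)"
  shows "(X-h0)*(l+h1-X) = (X-t0)*(m+t1-X)"
  using assms by algebra

theorem theorem4:
  fixes N :: nat and lam mu :: complex
    and x xt xh xht :: "int \<Rightarrow> complex"
  assumes N: "N \<ge> 1"
    and per: "\<And>k. x (k + int N) = x k" "\<And>k. xt (k + int N) = xt k"
             "\<And>k. xh (k + int N) = xh k" "\<And>k. xht (k + int N) = xht k"
    and E: "\<And>k. (xt k - x k) * (lam + x k - xt (k - 1))
                 = (xh k - x k) * (mu + x k - xh (k - 1))"
    and gen1: "\<And>k. lam + xh k - mu - xt k \<noteq> 0"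
    and gen2: "\<And>k. xh k \<noteq> xt k"
  shows "((\<forall>k. (xht k - xh k) * (lam + x (k + 1) - xt k)
                 = (xht k - xt k) * (mu + x (k + 1) - xh k))
          \<longleftrightarrow>
          (\<forall>k. (xt (k + 1) - x (k + 1)) * (lam + xh (k + 1) - xht k)
                 = (xh (k + 1) - x (k + 1)) * (mu + xt (k + 1) - xht k)))
       \<and> (((\<forall>k. (xht k - xh k) * (lam + x (k + 1) - xt k)
                   = (xht k - xt k) * (mu + x (k + 1) - xh k))
           \<or> (\<forall>k. (xt (k + 1) - x (k + 1)) * (lam + xh (k + 1) - xht k)
                   = (xh (k + 1) - x (k + 1)) * (mu + xt (k + 1) - xht k)))
          \<longrightarrow> (\<forall>k.
                (xt k - x k) * (lam + x (k + 1) - xt k)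
                  = (xht k - xt k) * (mu + xt k - xht (k - 1))
              \<and> (xh k - x k) * (mu + x (k + 1) - xh k)
                  = (xht k - xh k) * (lam + xh k - xht (k - 1))
              \<and> (xht k - xh k) * (lam + xh (k + 1) - xht k)
                  = (xht k - xt k) * (mu + xt (k + 1) - xht k)))"
proof -
  let ?S1 = "\<lambda>k. (xht k - xh k) * (lam + x (k + 1) - xt k) = (xht k - xt k) * (mu + x (k + 1) - xh k)"
  let ?S2 = "\<lambda>k. (xt (k + 1) - x (k + 1)) * (lam + xh (k + 1) - xht k) = (xh (k + 1) - x (k + 1)) * (mu + xt (k + 1) - xht k)"
  have Ek1: "\<And>k. (xt (k+1) - x (k+1)) * (lam + x (k+1) - xt k) = (xh (k+1) - x (k+1)) * (mu + x (k+1) - xh k)"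
    using E[of "_+1"] by simp
  have eq: "?S1 k \<longleftrightarrow> ?S2 k" for k
    using S12a[OF Ek1[of k] gen1[of k]] S12b[OF Ek1[of k] gen2[of "k+1"]] by blast
  hence eqall: "(\<forall>k. ?S1 k) \<longleftrightarrow> (\<forall>k. ?S2 k)" by blast
  have main: "\<forall>k. (xt k - x k) * (lam + x (k + 1) - xt k) = (xht k - xt k) * (mu + xt k - xht (k - 1))
              \<and> (xh k - x k) * (mu + x (k + 1) - xh k) = (xht k - xh k) * (lam + xh k - xht (k - 1))
              \<and> (xht k - xh k) * (lam + xh (k + 1) - xht k) = (xht k - xt k) * (mu + xt (k + 1) - xht k)"
    if S: "\<forall>k. ?S1 k"
  proof
    fix k
    have Sm: "(xht (k-1) - xh (k-1)) * (lam + x k - xt (k-1)) = (xht (k-1) - xt (k-1)) * (mu + x k - xh (k-1))"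
      using S[rule_format, of "k-1"] by simp
    show "(xt k - x k) * (lam + x (k + 1) - xt k) = (xht k - xt k) * (mu + xt k - xht (k - 1))
              \<and> (xh k - x k) * (mu + x (k + 1) - xh k) = (xht k - xh k) * (lam + xh k - xht (k - 1))
              \<and> (xht k - xh k) * (lam + xh (k + 1) - xht k) = (xht k - xt k) * (mu + xt (k + 1) - xht k)"
      using E1[OF E[of k] gen1[of k] gen1[of "k-1"] S[rule_format, of k] Sm]
            E2[OF E[of k] gen1[of k] gen1[of "k-1"] S[rule_format, of k] Sm]
            E12[OF Ek1[of k] gen1[of k] S[rule_format, of k]] by blast
  qed
  show ?thesis using eqall main by blast
qed

end
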